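(* The class $\mathbb{ML}^{\Box\Diamond}$, regarded as a class of algebras $(L;\wedge,\vee,\neg,\Box,\Diamond)$, is an equational class (a variety). Concretely, such an algebra belongs to $\mathbb{ML}^{\Box\Diamond}$ if and only if it satisfies the lattice identities, the identities $x\wedge\neg x\preccurlyeq y$, $y\preccurlyeq\neg(x\wedge\neg x)$, $x\wedge\neg(x\wedge y)\preccurlyeq\neg y$, $x\vee\neg\Box x\approx 1$, $\Box 1\approx 1$, $\Box(x\vee\neg y)\wedge y\approx\Box x\wedge y$, and the identities $\neg x\vee\Diamond x\approx 1$, $\Diamond x\preccurlyeq\Diamond(x\vee y)$, $\Diamond\Box x\preccurlyeq x$, where $1$ abbreviates $\neg(x\wedge\neg x)$ and $s\preccurlyeq t$ abbreviates $s\wedge t\approx s$.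
   Context: A meet-complemented lattice is a lattice $(L,\le)$ (not necessarily distributive) such that for every $a\in L$ the element $\neg a=\max\{b\in L: a\wedge b\le c\ \text{for all } c\in L\}$ exists; such a lattice is bounded, with bottom $0$ and top $1$. For $a\in L$, $\Box a=\max\{b\in L: a\vee\neg b=1\}$ and $\Diamond a=\min\{b\in L: \neg a\vee b=1\}$, when these exist. $\mathbb{ML}^{\Box\Diamond}$ is the class of meet-complemented lattices in which both $\Box a$ and $\Diamond a$ exist for every $a$, considered as algebras with operations $\wedge,\vee,\neg,\Box,\Diamond$. *)

theory Defs
  imports Main
begin

definition lattice_ops :: "('a \<Rightarrow> 'a \<Rightarrow> 'a) \<Rightarrow> ('a \<Rightarrow> 'a \<Rightarrow> 'a) \<Rightarrow> bool" where
  "lattice_ops m j \<longleftrightarrow>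
     (\<forall>x y. m x y = m y x) \<and> (\<forall>x y. j x y = j y x) \<and>
     (\<forall>x y z. m (m x y) z = m x (m y z)) \<and> (\<forall>x y z. j (j x y) z = j x (j y z)) \<and>
     (\<forall>x. m x x = x) \<and> (\<forall>x. j x x = x) \<and>
     (\<forall>x y. m x (j x y) = x) \<and> (\<forall>x y. j x (m x y) = x)"

definition mle :: "('a \<Rightarrow> 'a \<Rightarrow> 'a) \<Rightarrow> 'a \<Rightarrow> 'a \<Rightarrow> bool" where
  "mle m a b \<longleftrightarrow> m a b = a"

definition is_greatest_in :: "('a \<Rightarrow> 'a \<Rightarrow> 'a) \<Rightarrow> ('a \<Rightarrow> bool) \<Rightarrow> 'a \<Rightarrow> bool" where
  "is_greatest_in m P x \<longleftrightarrow> P x \<and> (\<forall>y. P y \<longrightarrow> mle m y x)"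

definition is_least_in :: "('a \<Rightarrow> 'a \<Rightarrow> 'a) \<Rightarrow> ('a \<Rightarrow> bool) \<Rightarrow> 'a \<Rightarrow> bool" where
  "is_least_in m P x \<longleftrightarrow> P x \<and> (\<forall>y. P y \<longrightarrow> mle m x y)"

text \<open>Membership in the class ML^{box dia}: (L, meet, join) is a lattice, neg a is the
  meet-complement, and box / dia are the operations defined from it (1 = top).\<close>
definition in_MLbd ::
  "('a \<Rightarrow> 'a \<Rightarrow> 'a) \<Rightarrow> ('a \<Rightarrow> 'a \<Rightarrow> 'a) \<Rightarrow> ('a \<Rightarrow> 'a) \<Rightarrow> ('a \<Rightarrow> 'a) \<Rightarrow> ('a \<Rightarrow> 'a) \<Rightarrow> bool" where
  "in_MLbd m j n b d \<longleftrightarrow>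
     lattice_ops m j \<and>
     (\<forall>a. is_greatest_in m (\<lambda>c. \<forall>e. mle m (m a c) e) (n a)) \<and>
     (\<exists>t. (\<forall>x. mle m x t) \<and>
          (\<forall>a. is_greatest_in m (\<lambda>c. j a (n c) = t) (b a)) \<and>
          (\<forall>a. is_least_in m (\<lambda>c. j (n a) c = t) (d a)))"

end

theory Submission
  imports Defs
begin

locale lat = fixes m j :: "'a \<Rightarrow> 'a \<Rightarrow> 'a" assumes L: "lattice_ops m j"
begin
lemma mc: "m x y = m y x" and jc: "j x y = j y x" and ma: "m (m x y) z = m x (m y z)"
  and ja: "j (j x y) z = j x (j y z)" and mi: "m x x = x" and ji: "j x x = x"
  and mab: "m x (j x y) = x" and jab: "j x (m x y) = x"
  using L unfolding lattice_ops_def by blast+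

lemma le_j: "mle m x y \<longleftrightarrow> j x y = y"
  unfolding mle_def by (metis mc jc mab jab)
lemma refl: "mle m x x" by (simp add: mle_def mi)
lemma antisym: "mle m x y \<Longrightarrow> mle m y x \<Longrightarrow> x = y" unfolding mle_def by (metis mc)
lemma trans: "mle m x y \<Longrightarrow> mle m y z \<Longrightarrow> mle m x z" unfolding mle_def by (metis ma)
lemma m1: "mle m (m x y) x" unfolding mle_def by (metis mc ma mi)
lemma m2: "mle m (m x y) y" unfolding mle_def by (metis ma mi)
lemma glb: "mle m z x \<Longrightarrow> mle m z y \<Longrightarrow> mle m z (m x y)" unfolding mle_def by (metis ma)
lemma j1: "mle m x (j x y)" unfolding le_j by (metis ja ji)
lemma j2: "mle m y (j x y)" unfolding le_j by (metis ja ji jc)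
lemma lub: "mle m x z \<Longrightarrow> mle m y z \<Longrightarrow> mle m (j x y) z" unfolding le_j by (metis ja)
lemma jmono: "mle m x x' \<Longrightarrow> mle m y y' \<Longrightarrow> mle m (j x y) (j x' y')"
  by (meson j1 j2 lub trans)
lemma mmono: "mle m x x' \<Longrightarrow> mle m y y' \<Longrightarrow> mle m (m x y) (m x' y')"
  by (meson m1 m2 glb trans)
end

theorem mainTheorem2:
  fixes m j :: "'a \<Rightarrow> 'a \<Rightarrow> 'a" and n b d :: "'a \<Rightarrow> 'a"
  shows "in_MLbd m j n b d \<longleftrightarrow>
    (lattice_ops m j \<and>
     (\<forall>x y. mle m (m x (n x)) y) \<and>
     (\<forall>x y. mle m y (n (m x (n x)))) \<and>
     (\<forall>x y. mle m (m x (n (m x y))) (n y)) \<and>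
     (\<forall>x. j x (n (b x)) = n (m x (n x))) \<and>
     (\<forall>x. b (n (m x (n x))) = n (m x (n x))) \<and>
     (\<forall>x y. m (b (j x (n y))) y = m (b x) y) \<and>
     (\<forall>x. j (n x) (d x) = n (m x (n x))) \<and>
     (\<forall>x y. mle m (d x) (d (j x y))) \<and>
     (\<forall>x. mle m (d (b x)) x))" (is "?A \<longleftrightarrow> ?B")
proof
  assume A: ?A
  then have L: "lattice_ops m j" unfolding in_MLbd_def by blast
  interpret lat m j by standard (rule L)
  from A obtain t where top: "\<And>x. mle m x t"
    and B: "\<And>a. is_greatest_in m (\<lambda>c. j a (n c) = t) (b a)"
    and D: "\<And>a. is_least_in m (\<lambda>c. j (n a) c = t) (d a)"
    and N: "\<And>a. is_greatest_in m (\<lambda>c. \<forall>e. mle m (m a c) e) (n a)"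
    unfolding in_MLbd_def by blast
  have bot: "\<And>a e. mle m (m a (n a)) e" using N unfolding is_greatest_in_def by blast
  have nle: "\<And>a c. (\<And>e. mle m (m a c) e) \<Longrightarrow> mle m c (n a)"
    using N unfolding is_greatest_in_def by blast
  have teq: "\<And>x. n (m x (n x)) = t"
    by (meson antisym top nle bot m1 trans)
  have topeq: "\<And>z. mle m t z \<Longrightarrow> z = t" using antisym top by blast
  have Bj: "\<And>a. j a (n (b a)) = t" using B unfolding is_greatest_in_def by blast
  have Bg: "\<And>a c. j a (n c) = t \<Longrightarrow> mle m c (b a)" using B unfolding is_greatest_in_def by blast
  have Dj: "\<And>a. j (n a) (d a) = t" using D unfolding is_least_in_def by blast
  have Dl: "\<And>a c. j (n a) c = t \<Longrightarrow> mle m (d a) c" using D unfolding is_least_in_def by blast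
  have nanti: "\<And>c c'. mle m c c' \<Longrightarrow> mle m (n c') (n c)"
  proof -
    fix c c' assume "mle m c c'"
    then have "mle m (m c (n c')) (m c' (n c'))" by (simp add: mmono refl)
    then show "mle m (n c') (n c)" using nle bot trans by blast
  qed
  have bmono: "\<And>x y. mle m x y \<Longrightarrow> mle m (b x) (b y)"
  proof -
    fix x y assume "mle m x y"
    then have "mle m (j x (n (b x))) (j y (n (b x)))" by (simp add: jmono refl)
    then show "mle m (b x) (b y)" using Bg Bj topeq by metis
  qed
  have g6: "\<And>x y. m (b (j x (n y))) y = m (b x) y"
  proof -
    fix x y
    let ?c = "m (b (j x (n y))) y"
    have "mle m (j (j x (n y)) (n (b (j x (n y))))) (j x (n ?c))"
      by (metis ja jmono refl lub nanti m1 m2)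
    then have "mle m ?c (b x)" using Bg Bj topeq by metis
    then have "mle m ?c (m (b x) y)" using glb m2 by blast
    moreover have "mle m (m (b x) y) ?c" using mmono bmono j1 refl by blast
    ultimately show "?c = m (b x) y" using antisym by blast
  qed
  have g9: "\<And>x y. mle m (d x) (d (j x y))"
  proof -
    fix x y
    have "mle m (j (n (j x y)) (d (j x y))) (j (n x) (d (j x y)))"
      by (simp add: jmono refl nanti j1)
    then show "mle m (d x) (d (j x y))" using Dl Dj topeq by metis
  qed
  have g3: "\<And>x y. mle m (m x (n (m x y))) (n y)"
  proof -
    fix x y
    have "m y (m x (n (m x y))) = m (m x y) (n (m x y))" by (metis ma mc)
    then show "mle m (m x (n (m x y))) (n y)" using nle bot by metis
  qed
  have bt: "b t = t" using Bg topeq j1 top by metis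
  show ?B using L bot top teq g3 Bj bt g6 Dj g9 Dl jc by metis
next
  assume B: ?B
  then have L: "lattice_ops m j" by blast
  interpret lat m j by standard (rule L)
  have I1: "\<And>x y. mle m (m x (n x)) y" and I2: "\<And>x y. mle m y (n (m x (n x)))"
    and I3: "\<And>x y. mle m (m x (n (m x y))) (n y)"
    and I4: "\<And>x. j x (n (b x)) = n (m x (n x))"
    and I5: "\<And>x. b (n (m x (n x))) = n (m x (n x))"
    and I6: "\<And>x y. m (b (j x (n y))) y = m (b x) y"
    and I7: "\<And>x. j (n x) (d x) = n (m x (n x))"
    and I8: "\<And>x y. mle m (d x) (d (j x y))"
    and I9: "\<And>x. mle m (d (b x)) x" using B by blast+
  define t where "t = n (m undefined (n undefined))"
  have one: "\<And>x. n (m x (n x)) = t" unfolding t_def using I2 antisym by blast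
  have top: "\<And>x. mle m x t" using I2 one by metis
  have Nl: "\<And>a. is_greatest_in m (\<lambda>c. \<forall>e. mle m (m a c) e) (n a)"
    unfolding is_greatest_in_def
  proof (intro allI conjI impI)
    fix a e show "mle m (m a (n a)) e" by (rule I1)
  next
    fix a c assume h: "\<forall>e. mle m (m a c) e"
    have "m c a = m c (n c)" using h I1 antisym mc by metis
    then have "n (m c a) = t" using one by simp
    then have "m c (n (m c a)) = c" using top mc mle_def by metis
    then show "mle m c (n a)" using I3[of c a] by simp
  qed
  have Bl: "\<And>a. is_greatest_in m (\<lambda>c. j a (n c) = t) (b a)"
    unfolding is_greatest_in_def
  proof (intro allI conjI impI)
    fix a show "j a (n (b a)) = t" using I4 one by simp
  next
    fix a c assume "j a (n c) = t"
    then have "m t c = m (b a) c" using I6[of a c] I5 one by metis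
    then show "mle m c (b a)" using top mc mle_def by metis
  qed
  have Dl: "\<And>a. is_least_in m (\<lambda>c. j (n a) c = t) (d a)"
    unfolding is_least_in_def
  proof (intro allI conjI impI)
    fix a show "j (n a) (d a) = t" using I7 one by simp
  next
    fix a c assume "j (n a) c = t"
    then have "mle m a (b c)" using Bl jc unfolding is_greatest_in_def by metis
    then have "j a (b c) = b c" using le_j by blast
    then show "mle m (d a) c" using I8[of a "b c"] I9[of c] trans by metis
  qed
  show ?A unfolding in_MLbd_def using L Nl top Bl Dl by blast
qed

end
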